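(* Let $\varepsilon>0$, $p\in(0,1/2)$, and $R=1-H(p)-\varepsilon$. Let $\mathcal{C}\subseteq\mathbb{F}_2^n$ be a random linear code of rate $R$. Then with probability $1-\exp(-\Omega_\varepsilon(n))$, $\mathcal{C}$ satisfies $S_{\mathcal{C}}\le 2$.
   Context: $H(p)=-p\log_2 p-(1-p)\log_2(1-p)$. $L_{\mathcal{C}}(x)=|\{c\in\mathcal{C}:\Delta(x,c)\le pn\}|$ with $\Delta$ Hamming distance; $A_{\mathcal{C}}(x)=2^{\frac{\varepsilon n L_{\mathcal{C}}(x)}{1+\varepsilon}}$ and $S_{\mathcal{C}}=\mathbb{E}_{x\sim\mathbb{F}_2^n}[A_{\mathcal{C}}(x)]$ ($x$ uniform). A random linear code of rate $R$ is $\mathrm{span}(b_1,\dots,b_k)$ with $k=Rn$ (an integer) and $b_i$ independent uniform in $\mathbb{F}_2^n$. *)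

theory Defs
  imports Complex_Main
begin

definition H :: "real \<Rightarrow> real" where
  "H p = - p * log 2 p - (1 - p) * log 2 (1 - p)"

text \<open>Vectors of F_2^n: functions nat => bool vanishing outside {..<n}
  (True = 1, False = 0).\<close>
definition vecs :: "nat \<Rightarrow> (nat \<Rightarrow> bool) set" where
  "vecs n = {v. \<forall>i. n \<le> i \<longrightarrow> v i = False}"

definition hamming :: "nat \<Rightarrow> (nat \<Rightarrow> bool) \<Rightarrow> (nat \<Rightarrow> bool) \<Rightarrow> nat" where
  "hamming n x y = card {i. i < n \<and> x i \<noteq> y i}"

text \<open>Generator tuples (b_0,...,b_{k-1}) with each b_i in F_2^n
  (unused indices fixed to zero so the set is finite).\<close>
definition gen_tuples :: "nat \<Rightarrow> nat \<Rightarrow> (nat \<Rightarrow> nat \<Rightarrow> bool) set" where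
  "gen_tuples n k = {b. (\<forall>i<k. b i \<in> vecs n) \<and> (\<forall>i. k \<le> i \<longrightarrow> b i = (\<lambda>_. False))}"

definition lin_comb :: "(nat \<Rightarrow> nat \<Rightarrow> bool) \<Rightarrow> nat set \<Rightarrow> nat \<Rightarrow> bool" where
  "lin_comb b S = (\<lambda>j. odd (card {i\<in>S. b i j}))"

definition span_code :: "nat \<Rightarrow> (nat \<Rightarrow> nat \<Rightarrow> bool) \<Rightarrow> (nat \<Rightarrow> bool) set" where
  "span_code k b = {lin_comb b S | S. S \<subseteq> {..<k}}"

definition list_size :: "nat \<Rightarrow> real \<Rightarrow> (nat \<Rightarrow> bool) set \<Rightarrow> (nat \<Rightarrow> bool) \<Rightarrow> nat" where
  "list_size n p C x = card {c \<in> C. real (hamming n x c) \<le> p * real n}"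

definition A_pot :: "nat \<Rightarrow> real \<Rightarrow> real \<Rightarrow> (nat \<Rightarrow> bool) set \<Rightarrow> (nat \<Rightarrow> bool) \<Rightarrow> real" where
  "A_pot n p \<epsilon> C x = 2 powr (\<epsilon> * real n * real (list_size n p C x) / (1 + \<epsilon>))"

definition S_pot :: "nat \<Rightarrow> real \<Rightarrow> real \<Rightarrow> (nat \<Rightarrow> bool) set \<Rightarrow> real" where
  "S_pot n p \<epsilon> C = (\<Sum>x\<in>vecs n. A_pot n p \<epsilon> C x) / 2 ^ n"

text \<open>Probability, over independent uniform b_0..b_{k-1} in F_2^n, that the
  random linear code span(b) satisfies property P.\<close>
definition rlc_prob :: "nat \<Rightarrow> nat \<Rightarrow> ((nat \<Rightarrow> bool) set \<Rightarrow> bool) \<Rightarrow> real" where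
  "rlc_prob n k P = real (card {b \<in> gen_tuples n k. P (span_code k b)}) / real (card (gen_tuples n k))"

end

theory Submission
  imports Defs
begin

definition xorv :: "(nat \<Rightarrow> bool) \<Rightarrow> (nat \<Rightarrow> bool) \<Rightarrow> nat \<Rightarrow> bool" where
  "xorv x v = (\<lambda>j. x j \<noteq> v j)"

lemma xorv_vecs: "x \<in> vecs n \<Longrightarrow> v \<in> vecs n \<Longrightarrow> xorv x v \<in> vecs n"
  by (simp add: vecs_def xorv_def)

lemma xorv_invol[simp]: "xorv (xorv x v) v = x"
  by (auto simp: xorv_def fun_eq_iff)

lemma bij_vecs: "bij_betw (\<lambda>x. {i. x i}) (vecs n) (Pow {..<n})"
proof (rule bij_betw_byWitness[where f'="\<lambda>S i. i \<in> S"])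
  show "\<forall>a\<in>vecs n. (\<lambda>i. i \<in> {i. a i}) = a" by auto
  show "\<forall>a'\<in>Pow {..<n}. {i. i \<in> a'} = a'" by auto
  show "(\<lambda>x. {i. x i}) ` vecs n \<subseteq> Pow {..<n}" by (auto simp: vecs_def) (meson not_less)
  show "(\<lambda>S i. i \<in> S) ` Pow {..<n} \<subseteq> vecs n" by (auto simp: vecs_def)
qed

lemma finite_vecs: "finite (vecs n)"
  using bij_betw_finite[OF bij_vecs] by simp

lemma card_vecs: "card (vecs n) = 2 ^ n"
  using bij_betw_same_card[OF bij_vecs] by (simp add: card_Pow)

lemma bij_xorv: "x \<in> vecs n \<Longrightarrow> bij_betw (xorv x) (vecs n) (vecs n)"
  apply (rule bij_betw_byWitness[where f'="xorv x"])
  apply (auto simp: xorv_def vecs_def)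
  done

lemma sum_xorv: "x \<in> vecs n \<Longrightarrow> (\<Sum>v\<in>vecs n. g (xorv x v)) = (\<Sum>y\<in>vecs n. g y)"
  by (rule sum.reindex_bij_betw[OF bij_xorv])

lemma ham_xor: "hamming n x (xorv c v) = hamming n (xorv x v) c"
  unfolding hamming_def xorv_def by (rule arg_cong[where f=card]) auto

lemma inj_xorv2: "inj (\<lambda>c. xorv c v)"
  by (metis injI xorv_invol)

lemma list_size_trans:
  "list_size n p ((\<lambda>c. xorv c v) ` C) x = list_size n p C (xorv x v)"
proof -
  have "{c \<in> (\<lambda>c. xorv c v) ` C. real (hamming n x c) \<le> p * real n}
      = (\<lambda>c. xorv c v) ` {c \<in> C. real (hamming n x (xorv c v)) \<le> p * real n}"
    by blast
  also have "{c \<in> C. real (hamming n x (xorv c v)) \<le> p * real n} = {c \<in> C. real (hamming n (xorv x v) c) \<le> p * real n}"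
    by (simp only: ham_xor)
  finally show ?thesis unfolding list_size_def
    by (simp add: card_image inj_on_subset[OF inj_xorv2])
qed

lemma list_size_union:
  assumes "finite C" "finite D" "E \<subseteq> C \<union> D"
  shows "list_size n p E x \<le> list_size n p C x + list_size n p D x"
proof -
  have "list_size n p E x \<le> card ({c \<in> C. real (hamming n x c) \<le> p * real n} \<union> {c \<in> D. real (hamming n x c) \<le> p * real n})"
    unfolding list_size_def using assms by (intro card_mono) auto
  also have "\<dots> \<le> list_size n p C x + list_size n p D x"
    unfolding list_size_def by (rule card_Un_le)
  finally show ?thesis .
qed

lemma A_pos: "A_pot n p e C x > 0" by (simp add: A_pot_def)

lemma A_ge1: "e > 0 \<Longrightarrow> A_pot n p e C x \<ge> 1"
  unfolding A_pot_def by (rule ge_one_powr_ge_zero) auto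

lemma A_union:
  assumes "e > 0" "finite C" "E \<subseteq> C \<union> (\<lambda>c. xorv c v) ` C"
  shows "A_pot n p e E x \<le> A_pot n p e C x * A_pot n p e C (xorv x v)"
proof -
  have "list_size n p E x \<le> list_size n p C x + list_size n p C (xorv x v)"
    using list_size_union[OF assms(2) _ assms(3)] assms(2) by (simp add: list_size_trans)
  then have "e * real n * real (list_size n p E x) / (1 + e) \<le> e * real n * real (list_size n p C x) / (1 + e) + e * real n * real (list_size n p C (xorv x v)) / (1 + e)"
    using assms(1) by (simp add: divide_right_mono mult_left_mono flip: add_divide_distrib distrib_left of_nat_add)
  then show ?thesis unfolding A_pot_def by (simp add: powr_add[symmetric])
qed

lemma ln_sum_le:
  fixes a :: "'a \<Rightarrow> real"
  assumes "finite V" "V \<noteq> {}" "\<And>v. v \<in> V \<Longrightarrow> a v > 0"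
  shows "(\<Sum>v\<in>V. ln (a v)) \<le> real (card V) * ln ((\<Sum>v\<in>V. a v) / real (card V))"
proof -
  define m where "m = (\<Sum>v\<in>V. a v) / real (card V)"
  have cV: "real (card V) > 0" using assms by (simp add: card_gt_0_iff)
  have sa: "(\<Sum>v\<in>V. a v) > 0" using assms by (intro sum_pos) auto
  then have m0: "m > 0" using cV by (simp add: m_def)
  have "\<And>v. v \<in> V \<Longrightarrow> ln (a v) - ln m \<le> a v / m - 1"
  proof -
    fix v assume v: "v \<in> V"
    have "ln (a v / m) \<le> a v / m - 1" using assms(3)[OF v] m0 by (intro ln_le_minus_one) simp
    moreover have "ln (a v / m) = ln (a v) - ln m" using assms(3)[OF v] m0 by (rule ln_divide_pos)
    ultimately show "ln (a v) - ln m \<le> a v / m - 1" by simp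
  qed
  then have "(\<Sum>v\<in>V. ln (a v) - ln m) \<le> (\<Sum>v\<in>V. a v / m - 1)"
    by (rule sum_mono)
  also have "(\<Sum>v\<in>V. a v / m - 1) = (\<Sum>v\<in>V. a v) / m - real (card V)"
    by (simp only: sum_subtractf sum_divide_distrib sum_constant)
  also have "\<dots> = 0" using cV sa unfolding m_def by simp
  finally have "(\<Sum>v\<in>V. ln (a v)) - real (card V) * ln m \<le> 0"
    by (simp only: sum_subtractf sum_constant)
  then show ?thesis unfolding m_def by simp
qed

lemma S_ge1: "e > 0 \<Longrightarrow> S_pot n p e C \<ge> 1"
proof -
  assume e: "e > 0"
  have "(\<Sum>x\<in>vecs n. (1::real)) \<le> (\<Sum>x\<in>vecs n. A_pot n p e C x)"
    by (rule sum_mono) (rule A_ge1[OF e])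
  moreover have "(\<Sum>x\<in>vecs n. (1::real)) = 2 ^ n" by (simp add: card_vecs)
  ultimately have "2 ^ n \<le> (\<Sum>x\<in>vecs n. A_pot n p e C x)" by simp
  then show ?thesis unfolding S_pot_def by simp
qed

lemma key_sum:
  assumes e: "e > 0" and fC: "finite C" and D: "\<And>v. D v \<subseteq> C \<union> (\<lambda>c. xorv c v) ` C"
  shows "(\<Sum>v\<in>vecs n. S_pot n p e (D v)) \<le> 2 ^ n * (S_pot n p e C)\<^sup>2"
proof -
  let ?A = "A_pot n p e C"
  have "(\<Sum>v\<in>vecs n. S_pot n p e (D v)) \<le> (\<Sum>v\<in>vecs n. (\<Sum>x\<in>vecs n. ?A x * ?A (xorv x v)) / 2 ^ n)"
    unfolding S_pot_def
    by (intro sum_mono divide_right_mono A_union[OF e fC D]) auto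
  also have "\<dots> = (\<Sum>v\<in>vecs n. \<Sum>x\<in>vecs n. ?A x * ?A (xorv x v)) / 2 ^ n"
    by (rule sum_divide_distrib[symmetric])
  also have "\<dots> = (\<Sum>x\<in>vecs n. \<Sum>v\<in>vecs n. ?A x * ?A (xorv x v)) / 2 ^ n"
    by (subst sum.swap) (rule refl)
  also have "\<dots> = (\<Sum>x\<in>vecs n. ?A x * (\<Sum>v\<in>vecs n. ?A (xorv x v))) / 2 ^ n"
    by (simp add: sum_distrib_left)
  also have "\<dots> = (\<Sum>x\<in>vecs n. ?A x * (\<Sum>y\<in>vecs n. ?A y)) / 2 ^ n"
    by (simp add: sum_xorv)
  also have "\<dots> = 2 ^ n * (S_pot n p e C)\<^sup>2"
    by (simp add: S_pot_def power2_eq_square sum_distrib_right[symmetric])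
  finally show ?thesis .
qed

lemma key_ln:
  assumes e: "e > 0" and fC: "finite C" and D: "\<And>v. D v \<subseteq> C \<union> (\<lambda>c. xorv c v) ` C"
  shows "(\<Sum>v\<in>vecs n. ln (S_pot n p e (D v))) \<le> 2 * 2 ^ n * ln (S_pot n p e C)"
proof -
  have ne: "vecs n \<noteq> {}" using card_vecs[of n] by auto
  have pos: "\<And>v. v \<in> vecs n \<Longrightarrow> S_pot n p e (D v) > 0"
    by (rule less_le_trans[OF zero_less_one S_ge1[OF e]])
  have cv: "real (card (vecs n)) = 2 ^ n" by (simp add: card_vecs)
  have s1: "(\<Sum>v\<in>vecs n. ln (S_pot n p e (D v))) \<le> 2 ^ n * ln ((\<Sum>v\<in>vecs n. S_pot n p e (D v)) / 2 ^ n)"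
    using ln_sum_le[OF finite_vecs ne pos] unfolding cv .
  have sp: "(\<Sum>v\<in>vecs n. S_pot n p e (D v)) > 0"
    using pos ne finite_vecs by (intro sum_pos) auto
  have le: "(\<Sum>v\<in>vecs n. S_pot n p e (D v)) / 2 ^ n \<le> (S_pot n p e C)\<^sup>2"
    using key_sum[OF e fC D] by (simp add: divide_le_eq mult.commute)
  have "ln ((\<Sum>v\<in>vecs n. S_pot n p e (D v)) / 2 ^ n) \<le> ln ((S_pot n p e C)\<^sup>2)"
    by (rule ln_mono[OF le]) (simp add: sp)
  also have "ln ((S_pot n p e C)\<^sup>2) = 2 * ln (S_pot n p e C)"
    by (simp only: ln_realpow of_nat_numeral)
  finally have s2: "ln ((\<Sum>v\<in>vecs n. S_pot n p e (D v)) / 2 ^ n) \<le> 2 * ln (S_pot n p e C)" .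
  have s3: "2 ^ n * ln ((\<Sum>v\<in>vecs n. S_pot n p e (D v)) / 2 ^ n) \<le> 2 ^ n * (2 * ln (S_pot n p e C))"
    by (rule mult_left_mono[OF s2]) simp
  have eq: "2 ^ n * (2 * ln (S_pot n p e C)) = 2 * 2 ^ n * ln (S_pot n p e C)" by simp
  from s1 s3 eq show ?thesis by linarith
qed

lemma lin_comb_insert:
  assumes "finite S" "i \<notin> S"
  shows "lin_comb b (insert i S) = xorv (lin_comb b S) (b i)"
proof (rule ext)
  fix m
  have "{j \<in> insert i S. b j m} = (if b i m then insert i {j \<in> S. b j m} else {j \<in> S. b j m})"
    by auto
  then show "lin_comb b (insert i S) m = xorv (lin_comb b S) (b i) m"
    using assms by (simp add: lin_comb_def xorv_def)
qed

lemma span_Suc_sub: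
  "span_code (Suc i) b \<subseteq> span_code i b \<union> (\<lambda>c. xorv c (b i)) ` span_code i b"
proof
  fix c assume "c \<in> span_code (Suc i) b"
  then obtain S where S: "S \<subseteq> {..<Suc i}" "c = lin_comb b S" by (auto simp: span_code_def)
  show "c \<in> span_code i b \<union> (\<lambda>c. xorv c (b i)) ` span_code i b"
  proof (cases "i \<in> S")
    case False
    then have "S \<subseteq> {..<i}" using S(1) by (auto simp: less_Suc_eq)
    then show ?thesis using S(2) unfolding span_code_def by blast
  next
    case True
    define S' where "S' = S - {i}"
    have S'1: "S' \<subseteq> {..<i}" using S(1) unfolding S'_def by (auto simp: less_Suc_eq)
    have S'2: "finite S'" using S'1 finite_subset by blast
    have S'3: "i \<notin> S'" unfolding S'_def by blast
    have S'4: "S = insert i S'" using True unfolding S'_def by blast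
    have "c = xorv (lin_comb b S') (b i)" using S(2) lin_comb_insert[OF S'2 S'3] S'4 by simp
    moreover have "lin_comb b S' \<in> span_code i b" using S'1 unfolding span_code_def by blast
    ultimately show ?thesis by blast
  qed
qed

lemma span_img: "span_code i b = lin_comb b ` Pow {..<i}"
  by (auto simp: span_code_def)

lemma finite_span: "finite (span_code i b)"
  by (simp add: span_img)

lemma span_cong: "(\<And>j. j < i \<Longrightarrow> b j = b' j) \<Longrightarrow> span_code i b = span_code i b'"
proof -
  assume h: "\<And>j. j < i \<Longrightarrow> b j = b' j"
  have "\<And>S. S \<in> Pow {..<i} \<Longrightarrow> lin_comb b S = lin_comb b' S"
  proof -
    fix S :: "nat set" assume S: "S \<in> Pow {..<i}"
    have "\<And>m. {j \<in> S. b j m} = {j \<in> S. b' j m}"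
    proof -
      fix m show "{j \<in> S. b j m} = {j \<in> S. b' j m}"
        using S h by (intro Collect_cong conj_cong refl) auto
    qed
    then show "lin_comb b S = lin_comb b' S" unfolding lin_comb_def by simp
  qed
  then show ?thesis unfolding span_img by (rule image_cong[OF refl])
qed

lemma span_0: "span_code 0 b = {\<lambda>j. False}"
  by (auto simp: span_code_def lin_comb_def)

lemma T0: "gen_tuples n 0 = {\<lambda>_ _. False}"
  by (auto simp: gen_tuples_def)

lemma T_Suc: "gen_tuples n (Suc i) = (\<lambda>(b, v). b(i := v)) ` (gen_tuples n i \<times> vecs n)"
proof
  show "gen_tuples n (Suc i) \<subseteq> (\<lambda>(b, v). b(i := v)) ` (gen_tuples n i \<times> vecs n)"
  proof
    fix b assume b: "b \<in> gen_tuples n (Suc i)"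
    have "b = (\<lambda>(b, v). b(i := v)) (b(i := (\<lambda>_. False)), b i)" by simp
    moreover have "(b(i := (\<lambda>_. False)), b i) \<in> gen_tuples n i \<times> vecs n"
      using b by (auto simp: gen_tuples_def less_Suc_eq)
    ultimately show "b \<in> (\<lambda>(b, v). b(i := v)) ` (gen_tuples n i \<times> vecs n)" by blast
  qed
  show "(\<lambda>(b, v). b(i := v)) ` (gen_tuples n i \<times> vecs n) \<subseteq> gen_tuples n (Suc i)"
    by (auto simp: gen_tuples_def less_Suc_eq)
qed

lemma T_inj: "inj_on (\<lambda>(b, v). b(i := v)) (gen_tuples n i \<times> vecs n)"
proof (rule inj_onI, clarify)
  fix b v b' v' assume h: "b \<in> gen_tuples n i" "v \<in> vecs n" "b' \<in> gen_tuples n i" "v' \<in> vecs n"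
    "b(i := v) = b'(i := v')"
  then have "v = v'" by (metis fun_upd_same)
  moreover have "b i = b' i" using h(1,3) by (simp add: gen_tuples_def)
  ultimately show "b = b' \<and> v = v'" using h(5) by (metis fun_upd_triv fun_upd_upd)
qed

lemma finite_T: "finite (gen_tuples n i)"
  by (induction i) (simp_all add: T0 T_Suc finite_vecs)

lemma card_T_Suc: "card (gen_tuples n (Suc i)) = card (gen_tuples n i) * 2 ^ n"
  by (simp add: T_Suc card_image[OF T_inj] card_cartesian_product card_vecs)

lemma card_T_pos: "card (gen_tuples n i) > 0"
  by (induction i) (simp_all add: T0 card_T_Suc)

lemma T_mem: "b \<in> gen_tuples n i \<Longrightarrow> b i = (\<lambda>_. False)"
  by (simp add: gen_tuples_def)

lemma main_ind:
  assumes e: "e > 0"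
  shows "(\<Sum>b\<in>gen_tuples n i. ln (S_pot n p e (span_code i b)))
     \<le> 2 ^ i * real (card (gen_tuples n i)) * ln (S_pot n p e {\<lambda>j. False})"
proof (induction i)
  case 0
  then show ?case by (simp add: T0 span_0)
next
  case (Suc i)
  let ?f = "\<lambda>b. ln (S_pot n p e (span_code (Suc i) b))"
  have "(\<Sum>b\<in>gen_tuples n (Suc i). ?f b) = (\<Sum>(b, v)\<in>gen_tuples n i \<times> vecs n. ?f (b(i := v)))"
    unfolding T_Suc by (subst sum.reindex[OF T_inj]) (simp add: case_prod_beta')
  also have "\<dots> = (\<Sum>b\<in>gen_tuples n i. \<Sum>v\<in>vecs n. ?f (b(i := v)))"
    by (rule sum.cartesian_product[symmetric])
  also have "\<dots> \<le> (\<Sum>b\<in>gen_tuples n i. 2 * 2 ^ n * ln (S_pot n p e (span_code i b)))"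
  proof (rule sum_mono)
    fix b assume b: "b \<in> gen_tuples n i"
    have eq: "\<And>v. span_code i (b(i := v)) = span_code i b" by (rule span_cong) simp
    show "(\<Sum>v\<in>vecs n. ?f (b(i := v))) \<le> 2 * 2 ^ n * ln (S_pot n p e (span_code i b))"
      apply (rule key_ln[OF e finite_span])
      using span_Suc_sub[of i "b(i := _)"] by (simp add: eq)
  qed
  also have "\<dots> = 2 * 2 ^ n * (\<Sum>b\<in>gen_tuples n i. ln (S_pot n p e (span_code i b)))"
    by (simp add: sum_distrib_left)
  also have "\<dots> \<le> 2 * 2 ^ n * (2 ^ i * real (card (gen_tuples n i)) * ln (S_pot n p e {\<lambda>j. False}))"
    by (rule mult_left_mono[OF Suc.IH]) simp
  also have "\<dots> = 2 ^ Suc i * real (card (gen_tuples n (Suc i))) * ln (S_pot n p e {\<lambda>j. False})"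
    by (simp add: card_T_Suc)
  finally show ?case .
qed


lemma prob_sum_one:
  fixes p :: real
  shows "(\<Sum>S\<in>Pow {..<n}. p ^ card S * (1 - p) ^ (n - card S)) = 1"
proof -
  have e1: "(\<Prod>x\<in>{..<n}. p + (1 - p)) = (\<Sum>X\<in>Pow {..<n}. (\<Prod>x\<in>X. p) * (\<Prod>x\<in>{..<n} - X. 1 - p))"
    by (rule prod_add) simp
  have e2: "(\<Sum>X\<in>Pow {..<n}. (\<Prod>x\<in>X. p) * (\<Prod>x\<in>{..<n} - X. 1 - p)) = (\<Sum>X\<in>Pow {..<n}. p ^ card X * (1 - p) ^ (n - card X))"
  proof (rule sum.cong[OF refl])
    fix X assume "X \<in> Pow {..<n}"
    then have "X \<subseteq> {..<n}" by simp
    then have "card ({..<n} - X) = n - card X" by (simp add: card_Diff_subset finite_subset)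
    then show "(\<Prod>x\<in>X. p) * (\<Prod>x\<in>{..<n} - X. 1 - p) = p ^ card X * (1 - p) ^ (n - card X)"
      by simp
  qed
  have "(\<Prod>x\<in>{..<n}. p + (1 - p)) = 1" by simp
  with e1 e2 show ?thesis by simp
qed

lemma term_bound:
  fixes p :: real
  assumes p: "0 < p" "p < 1/2" and w: "w \<le> n" "real w \<le> p * real n"
  shows "p ^ w * (1 - p) ^ (n - w) \<ge> 2 powr (- H p * real n)"
proof -
  have p1: "0 < 1 - p" using p by simp
  have d: "ln p - ln (1 - p) \<le> 0" using p by simp
  have "ln (p ^ w * (1 - p) ^ (n - w)) = real w * ln p + real (n - w) * ln (1 - p)"
    using p p1 by (simp add: ln_mult ln_realpow)
  also have "\<dots> = real n * ln (1 - p) + real w * (ln p - ln (1 - p))"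
    using w by (simp add: of_nat_diff algebra_simps)
  also have "\<dots> \<ge> real n * ln (1 - p) + (p * real n) * (ln p - ln (1 - p))"
    using mult_right_mono_neg[OF w(2) d] by simp
  also have "real n * ln (1 - p) + (p * real n) * (ln p - ln (1 - p)) = (- H p * real n) * ln 2"
  proof -
    have l2: "ln (2::real) > 0" by simp
    show ?thesis unfolding H_def log_def using l2 by (simp add: field_simps)
  qed
  finally have "(- H p * real n) * ln 2 \<le> ln (p ^ w * (1 - p) ^ (n - w))" .
  then have "exp ((- H p * real n) * ln 2) \<le> p ^ w * (1 - p) ^ (n - w)"
    using p p1 by (subst (asm) ln_ge_iff) simp_all
  then show ?thesis by (simp add: powr_def mult.commute)
qed

lemma ham0: "x \<in> vecs n \<Longrightarrow> hamming n x (\<lambda>j. False) = card {i. x i}"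
  unfolding hamming_def vecs_def by (rule arg_cong[where f=card]) (auto simp: not_le[symmetric])

lemma ball_bound:
  fixes p :: real
  assumes p: "0 < p" "p < 1/2"
  shows "real (card {x \<in> vecs n. real (hamming n x (\<lambda>j. False)) \<le> p * real n}) \<le> 2 powr (H p * real n)"
proof -
  let ?B = "{x \<in> vecs n. real (hamming n x (\<lambda>j. False)) \<le> p * real n}"
  let ?P = "{S \<in> Pow {..<n}. real (card S) \<le> p * real n}"
  let ?m = "2 powr (- H p * real n)"
  have bij: "bij_betw (\<lambda>x. {i. x i}) ?B ?P"
  proof -
    have "bij_betw (\<lambda>x. {i. x i}) ?B ((\<lambda>x. {i. x i}) ` ?B)"
      using bij_betw_subset[OF bij_vecs, of ?B] by (auto simp: bij_betw_def)
    moreover have "(\<lambda>x. {i. x i}) ` ?B = ?P"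
    proof
      show "(\<lambda>x. {i. x i}) ` ?B \<subseteq> ?P"
      proof
        fix S assume "S \<in> (\<lambda>x. {i. x i}) ` ?B"
        then obtain x where x: "x \<in> ?B" "S = {i. x i}" by blast
        have "S \<in> Pow {..<n}" using bij_betw_apply[OF bij_vecs] x by auto
        moreover have "hamming n x (\<lambda>j. False) = card S" using x ham0 by simp
        ultimately show "S \<in> ?P" using x by simp
      qed
      show "?P \<subseteq> (\<lambda>x. {i. x i}) ` ?B"
      proof
        fix S assume S: "S \<in> ?P"
        then have "(\<lambda>i. i \<in> S) \<in> vecs n" by (auto simp: vecs_def)
        moreover have "S = {i. (\<lambda>i. i \<in> S) i}" by simp
        ultimately show "S \<in> (\<lambda>x. {i. x i}) ` ?B" using S by (auto simp: ham0)
      qed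
    qed
    ultimately show ?thesis by simp
  qed
  have cB: "card ?B = card ?P" using bij_betw_same_card[OF bij] .
  have fP: "finite ?P" by simp
  have "real (card ?P) * ?m = (\<Sum>S\<in>?P. ?m)" by simp
  also have "\<dots> \<le> (\<Sum>S\<in>?P. p ^ card S * (1 - p) ^ (n - card S))"
  proof (rule sum_mono)
    fix S assume S: "S \<in> ?P"
    then have "card S \<le> n" using card_mono[of "{..<n}" S] by auto
    then show "?m \<le> p ^ card S * (1 - p) ^ (n - card S)"
      using term_bound[OF p, of "card S" n] S by simp
  qed
  also have "\<dots> \<le> (\<Sum>S\<in>Pow {..<n}. p ^ card S * (1 - p) ^ (n - card S))"
    using p by (intro sum_mono2) auto
  also have "\<dots> = 1" by (rule prob_sum_one)
  finally have "real (card ?P) * ?m \<le> 1" .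
  then have "real (card ?P) \<le> 1 / ?m" by (simp add: le_divide_eq)
  also have "1 / ?m = 2 powr (H p * real n)" by (simp add: powr_minus_divide)
  finally show ?thesis using cB by simp
qed


lemma S0_bound:
  assumes e: "e > 0"
  shows "ln (S_pot n p e {\<lambda>j. False}) \<le> 2 powr (e * real n / (1 + e)) * real (card {x \<in> vecs n. real (hamming n x (\<lambda>j. False)) \<le> p * real n}) / 2 ^ n"
proof -
  let ?P = "\<lambda>x. real (hamming n x (\<lambda>j. False)) \<le> p * real n"
  let ?B = "{x \<in> vecs n. ?P x}"
  let ?t = "2 powr (e * real n / (1 + e))"
  have tpos: "?t > 0" by simp
  have A: "A_pot n p e {\<lambda>j. False} x \<le> 1 + (if ?P x then ?t else 0)" for x
  proof (cases "?P x")
    case True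
    then have "{c \<in> {\<lambda>j. False}. real (hamming n x c) \<le> p * real n} = {\<lambda>j. False}" by auto
    then have "list_size n p {\<lambda>j. False} x = 1" unfolding list_size_def by simp
    then show ?thesis using True by (simp add: A_pot_def)
  next
    case False
    then have "list_size n p {\<lambda>j. False} x = 0" unfolding list_size_def by simp
    then show ?thesis using False by (simp add: A_pot_def)
  qed
  have "(\<Sum>x\<in>vecs n. A_pot n p e {\<lambda>j. False} x) \<le> (\<Sum>x\<in>vecs n. 1 + (if ?P x then ?t else 0))"
    by (rule sum_mono) (rule A)
  also have "\<dots> = 2 ^ n + (\<Sum>x\<in>vecs n. if ?P x then ?t else 0)"
    by (simp add: sum.distrib card_vecs)
  also have "(\<Sum>x\<in>vecs n. if ?P x then ?t else 0) = (\<Sum>x\<in>?B. ?t)"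
    by (rule sum.inter_filter[OF finite_vecs, symmetric])
  also have "\<dots> = ?t * real (card ?B)" by simp
  finally have sA: "(\<Sum>x\<in>vecs n. A_pot n p e {\<lambda>j. False} x) \<le> 2 ^ n + ?t * real (card ?B)" .
  have "S_pot n p e {\<lambda>j. False} \<le> (2 ^ n + ?t * real (card ?B)) / 2 ^ n"
    unfolding S_pot_def by (rule divide_right_mono[OF sA]) simp
  also have "\<dots> = 1 + ?t * real (card ?B) / 2 ^ n" by (simp add: add_divide_distrib)
  finally have "S_pot n p e {\<lambda>j. False} - 1 \<le> ?t * real (card ?B) / 2 ^ n" by simp
  moreover have "ln (S_pot n p e {\<lambda>j. False}) \<le> S_pot n p e {\<lambda>j. False} - 1"
    by (rule ln_le_minus_one) (rule less_le_trans[OF zero_less_one S_ge1[OF e]])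
  ultimately show ?thesis by linarith
qed


theorem lemma2:
  fixes \<epsilon> :: real
  assumes "\<epsilon> > 0"
  shows "\<exists>c>0. \<exists>n0. \<forall>n\<ge>n0. \<forall>p k.
           0 < p \<and> p < 1/2 \<and> real k = (1 - H p - \<epsilon>) * real n \<longrightarrow>
           rlc_prob n k (\<lambda>C. S_pot n p \<epsilon> C \<le> 2) \<ge> 1 - exp (- c * real n)"
proof -
  have e: "\<epsilon> > 0" by fact
  define c where "c = \<epsilon>\<^sup>2 * ln 2 / (2 * (1 + \<epsilon>))"
  have c0: "c > 0" unfolding c_def using e by simp
  define n0 where "n0 = nat \<lceil>- ln (ln 2) / c\<rceil>"
  have main: "rlc_prob n k (\<lambda>C. S_pot n p \<epsilon> C \<le> 2) \<ge> 1 - exp (- c * real n)"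
    if n: "n \<ge> n0" and p: "0 < p" "p < 1/2" and k: "real k = (1 - H p - \<epsilon>) * real n" for n p k
  proof -
    let ?T = "gen_tuples n k"
    let ?S = "\<lambda>b. S_pot n p \<epsilon> (span_code k b)"
    let ?bad = "{b \<in> ?T. \<not> ?S b \<le> 2}"
    let ?B = "{x \<in> vecs n. real (hamming n x (\<lambda>j. False)) \<le> p * real n}"
    let ?t = "2 powr (\<epsilon> * real n / (1 + \<epsilon>))"
    define NT where "NT = real (card ?T)"
    have NT0: "NT > 0" unfolding NT_def using card_T_pos by simp
    have fT: "finite ?T" by (rule finite_T)
    have nonneg: "\<And>b. ln (?S b) \<ge> 0" using S_ge1[OF e] by simp
    have "real (card ?bad) * ln 2 = (\<Sum>b\<in>?bad. ln 2)" by simp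
    also have "\<dots> \<le> (\<Sum>b\<in>?bad. ln (?S b))"
    proof (rule sum_mono)
      fix b assume "b \<in> ?bad"
      then have "?S b > 2" by simp
      then show "ln 2 \<le> ln (?S b)" by simp
    qed
    also have "\<dots> \<le> (\<Sum>b\<in>?T. ln (?S b))"
      by (rule sum_mono2[OF fT]) (auto intro: nonneg)
    also have "\<dots> \<le> 2 ^ k * NT * ln (S_pot n p \<epsilon> {\<lambda>j. False})"
      unfolding NT_def by (rule main_ind[OF e])
    also have "\<dots> \<le> 2 ^ k * NT * (?t * 2 powr (H p * real n) / 2 ^ n)"
    proof (rule mult_left_mono)
      have "ln (S_pot n p \<epsilon> {\<lambda>j. False}) \<le> ?t * real (card ?B) / 2 ^ n"
        by (rule S0_bound[OF e])
      also have "\<dots> \<le> ?t * 2 powr (H p * real n) / 2 ^ n"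
        by (intro divide_right_mono mult_left_mono ball_bound[OF p]) auto
      finally show "ln (S_pot n p \<epsilon> {\<lambda>j. False}) \<le> ?t * 2 powr (H p * real n) / 2 ^ n" .
      show "0 \<le> 2 ^ k * NT" using NT0 by simp
    qed
    also have "2 ^ k * NT * (?t * 2 powr (H p * real n) / 2 ^ n) = NT * exp (- (2 * c) * real n)"
    proof -
      have "(2::real) ^ k * (?t * 2 powr (H p * real n) / 2 ^ n)
          = 2 powr (real k + \<epsilon> * real n / (1 + \<epsilon>) + H p * real n - real n)"
        by (simp add: powr_add powr_diff powr_realpow)
      also have "real k + \<epsilon> * real n / (1 + \<epsilon>) + H p * real n - real n = - (\<epsilon>\<^sup>2 * real n / (1 + \<epsilon>))"
        unfolding k using e by (simp add: field_simps power2_eq_square)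
      also have "2 powr (- (\<epsilon>\<^sup>2 * real n / (1 + \<epsilon>))) = exp (- (2 * c) * real n)"
        unfolding powr_def c_def using e by (simp add: field_simps)
      finally have X: "(2::real) ^ k * (?t * 2 powr (H p * real n) / 2 ^ n) = exp (- (2 * c) * real n)" .
      have "2 ^ k * NT * (?t * 2 powr (H p * real n) / 2 ^ n) = NT * ((2::real) ^ k * (?t * 2 powr (H p * real n) / 2 ^ n))"
        by (simp only: ac_simps)
      then show ?thesis by (simp only: X)
    qed
    finally have bad1: "real (card ?bad) * ln 2 \<le> NT * exp (- (2 * c) * real n)" .
    have cn: "c * real n \<ge> - ln (ln 2)"
    proof -
      have "real n \<ge> real n0" using n by simp
      moreover have "real n0 \<ge> - ln (ln 2) / c" unfolding n0_def by linarith
      ultimately have "real n \<ge> - ln (ln 2) / c" by linarith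
      then have "c * (- ln (ln 2) / c) \<le> c * real n" using c0 by (intro mult_left_mono) auto
      then show ?thesis using c0 by simp
    qed
    have l2: "ln (2::real) > 0" by simp
    have ecn: "exp (- c * real n) \<le> ln 2"
    proof -
      have "exp (- c * real n) \<le> exp (ln (ln 2))" using cn by (subst exp_le_cancel_iff) linarith
      also have "exp (ln (ln 2)) = ln (2::real)" using l2 by (rule exp_ln)
      finally show ?thesis .
    qed
    have "exp (- (2 * c) * real n) = exp (- c * real n) * exp (- c * real n)"
      by (simp add: exp_add[symmetric])
    also have "\<dots> \<le> exp (- c * real n) * ln 2" by (rule mult_left_mono[OF ecn]) simp
    finally have "real (card ?bad) * ln 2 \<le> (NT * exp (- c * real n)) * ln 2"
      using bad1 NT0 by (smt (verit) mult.assoc mult_left_mono)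
    then have bad2: "real (card ?bad) \<le> NT * exp (- c * real n)" using l2 by simp
    have sub: "?bad \<subseteq> ?T" by blast
    have good: "{b \<in> ?T. ?S b \<le> 2} = ?T - ?bad" by blast
    have cg: "real (card {b \<in> ?T. ?S b \<le> 2}) = NT - real (card ?bad)"
      unfolding good NT_def using card_Diff_subset[OF finite_subset[OF sub fT] sub] card_mono[OF fT sub]
      by (simp add: of_nat_diff)
    have "rlc_prob n k (\<lambda>C. S_pot n p \<epsilon> C \<le> 2) = (NT - real (card ?bad)) / NT"
      unfolding rlc_prob_def using cg by (simp add: NT_def)
    also have "\<dots> = 1 - real (card ?bad) / NT" using NT0 by (simp add: diff_divide_distrib)
    also have "\<dots> \<ge> 1 - exp (- c * real n)" using bad2 NT0 by (simp add: divide_le_eq mult.commute)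
    finally show ?thesis .
  qed
  show ?thesis
  proof (rule exI[of _ c], rule conjI[OF c0], rule exI[of _ n0], intro allI impI)
    fix n p k assume "n \<ge> n0" and h: "0 < p \<and> p < 1/2 \<and> real k = (1 - H p - \<epsilon>) * real n"
    then show "rlc_prob n k (\<lambda>C. S_pot n p \<epsilon> C \<le> 2) \<ge> 1 - exp (- c * real n)"
      using main[of n p k] by blast
  qed
qed

end
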